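(* Let $p_1\in[0,1]$, $\alpha_1=2p_1-1$, and let $d_n(k)$ and $\tilde S^{(k)}$ be as in the context. Then, as $n\to\infty$, $$\sum_{k=1}^n\mathbb E\big(\tilde S^{(k)}_{d_n(k)}\big)^2=n(1+2\alpha_1^2)+O(\log^2 n).$$
   Context: Let $(u_j)_{j\ge1}$ be independent random variables with $u_j$ uniform on $\{1,\dots,j\}$. For $n\ge k\ge1$ let $d_n(k):=\#\{j\in\{k,\dots,n-1\}:u_j=k\}$ (so $d_n(n)=0$); i.e. $d_n(k)$ is the out-degree of vertex $k$ in the random recursive tree on $\{1,\dots,n\}$ where vertex $j+1$ attaches to $u_j$. Let $(\tilde S^{(k)})_{k\ge1}$ be independent random walks, independent of $(u_j)$, each with $\tilde S^{(k)}_0=0$ and i.i.d. increments equal to $+1$ with probability $p_1$ and $-1$ with probability $1-p_1$. *)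

theory Defs
  imports "HOL-Probability.Probability" "HOL-Library.Landau_Symbols"
begin

text \<open>Attachment choices u_1..u_{n-1}, independent, u_j uniform on {1..j}.\<close>
definition rrt_pmf :: "nat \<Rightarrow> (nat \<Rightarrow> nat) pmf" where
  "rrt_pmf n = Pi_pmf {1..<n} 0 (\<lambda>j. pmf_of_set {1..j})"

definition rrt_deg :: "nat \<Rightarrow> (nat \<Rightarrow> nat) \<Rightarrow> nat \<Rightarrow> nat" where
  "rrt_deg n u k = card {j \<in> {k..<n}. u j = k}"

text \<open>Increments of the walks S^(1..n); only the first n steps are needed since d_n(k) < n.
  True means increment +1 (probability p1), False means -1.\<close>
definition walks_pmf :: "real \<Rightarrow> nat \<Rightarrow> (nat \<Rightarrow> nat \<Rightarrow> bool) pmf" where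
  "walks_pmf p1 n = Pi_pmf {1..n} (\<lambda>_. False) (\<lambda>k. Pi_pmf {0..<n} False (\<lambda>_. bernoulli_pmf p1))"

definition walk_pos :: "(nat \<Rightarrow> bool) \<Rightarrow> nat \<Rightarrow> int" where
  "walk_pos X m = (\<Sum>i<m. if X i then 1 else -1)"

definition joint_pmf :: "real \<Rightarrow> nat \<Rightarrow> ((nat \<Rightarrow> nat) \<times> (nat \<Rightarrow> nat \<Rightarrow> bool)) pmf" where
  "joint_pmf p1 n = pair_pmf (rrt_pmf n) (walks_pmf p1 n)"

definition sum_second_moments :: "real \<Rightarrow> nat \<Rightarrow> real" where
  "sum_second_moments p1 n = (\<Sum>k=1..n. measure_pmf.expectation (joint_pmf p1 n)
      (\<lambda>(u, X). (real_of_int (walk_pos (X k) (rrt_deg n u k)))^2))"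

end

theory Submission imports Defs "HOL-Analysis.Harmonic_Numbers" begin

lemma int_bdd: fixes f :: "'a \<Rightarrow> real" assumes "\<And>x. \<bar>f x\<bar> \<le> B"
  shows "integrable (measure_pmf M) f"
  by (rule measure_pmf.integrable_const_bound[where B=B]) (use assms in auto)

lemma exp_prod_subset:
  fixes g :: "'a \<Rightarrow> 'b \<Rightarrow> real"
  assumes A: "finite A" and S: "S \<subseteq> A" and g0: "\<And>x v. 0 \<le> g x v" and g1: "\<And>x v. g x v \<le> 1"
  shows "measure_pmf.expectation (Pi_pmf A dflt p) (\<lambda>y. \<Prod>x\<in>S. g x (y x))
         = (\<Prod>x\<in>S. measure_pmf.expectation (p x) (g x))"
proof -
  define f where "f x = (if x \<in> S then g x else (\<lambda>_. 1))" for x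
  have e1: "(\<Prod>x\<in>S. g x (y x)) = (\<Prod>x\<in>A. f x (y x))" for y
    by (rule prod.mono_neutral_cong_left[OF A S]) (auto simp: f_def)
  have e2: "(\<Prod>x\<in>S. measure_pmf.expectation (p x) (g x)) = (\<Prod>x\<in>A. measure_pmf.expectation (p x) (f x))"
    by (rule prod.mono_neutral_cong_left[OF A S]) (auto simp: f_def)
  have "measure_pmf.expectation (Pi_pmf A dflt p) (\<lambda>y. \<Prod>x\<in>A. f x (y x))
         = (\<Prod>x\<in>A. measure_pmf.expectation (p x) (f x))"
  proof (rule expectation_prod_Pi_pmf[OF A])
    fix x assume "x \<in> A"
    show "integrable (measure_pmf (p x)) (f x)"
      by (rule int_bdd[where B=1]) (auto simp: f_def abs_le_iff intro: order.trans[OF _ g0] g1)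
  next
    fix x y show "0 \<le> f x y" by (auto simp: f_def g0)
  qed
  then show ?thesis by (simp add: e1 e2)
qed

lemma exp_pair:
  fixes f :: "'a \<times> 'b \<Rightarrow> real"
  assumes f0: "\<And>x. 0 \<le> f x" and fB: "\<And>x. f x \<le> B"
  shows "measure_pmf.expectation (pair_pmf P Q) f
       = measure_pmf.expectation P (\<lambda>a. measure_pmf.expectation Q (\<lambda>c. f (a, c)))"
proof -
  have iB: "integrable (measure_pmf M) g" if "\<And>x. 0 \<le> g x" "\<And>x. g x \<le> B" for M and g :: "'c \<Rightarrow> real"
    by (rule int_bdd[where B=B]) (use that in auto)
  have in0: "0 \<le> measure_pmf.expectation Q (\<lambda>c. f (a, c))" for a
    by (intro Bochner_Integration.integral_nonneg f0)
  have inB: "measure_pmf.expectation Q (\<lambda>c. f (a, c)) \<le> B" for a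
  proof -
    have b0: "0 \<le> B" using f0[of undefined] fB[of undefined] by linarith
    have "measure_pmf.expectation Q (\<lambda>c. f (a, c)) \<le> measure_pmf.expectation Q (\<lambda>c. B)"
      by (intro integral_mono iB f0 fB b0) auto
    then show ?thesis by simp
  qed
  have "ennreal (measure_pmf.expectation (pair_pmf P Q) f) = (\<integral>\<^sup>+x. ennreal (f x) \<partial>pair_pmf P Q)"
    by (rule nn_integral_eq_integral[symmetric]) (auto intro: iB f0 fB)
  also have "\<dots> = (\<integral>\<^sup>+a. \<integral>\<^sup>+c. ennreal (f (a, c)) \<partial>Q \<partial>P)"
    by (rule nn_integral_pair_pmf')
  also have "\<dots> = (\<integral>\<^sup>+a. ennreal (measure_pmf.expectation Q (\<lambda>c. f (a, c))) \<partial>P)"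
    by (intro nn_integral_cong nn_integral_eq_integral) (auto intro: iB f0 fB)
  also have "\<dots> = ennreal (measure_pmf.expectation P (\<lambda>a. measure_pmf.expectation Q (\<lambda>c. f (a, c))))"
    by (intro nn_integral_eq_integral) (auto intro: iB in0 inB)
  finally show ?thesis
    by (subst (asm) ennreal_inj) (auto intro!: Bochner_Integration.integral_nonneg f0 in0)
qed

definition sg :: "bool \<Rightarrow> real" where "sg b = (if b then 1 else -1)"
definition tb :: "bool \<Rightarrow> real" where "tb b = (if b then 1 else 0)"

lemma walk_pos_real: "real_of_int (walk_pos X m) = (\<Sum>i<m. sg (X i))"
  unfolding walk_pos_def sg_def of_int_sum by (intro sum.cong) auto

lemma sum_if_diag: "(\<Sum>i<m. \<Sum>j<m. if i = j then 1 else (a::real)) = m + a * (real m ^ 2 - m)"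
proof -
  have "(\<Sum>j<m. if i = j then 1 else a) = a * m + (1 - a)" if "i < m" for i
  proof -
    have "(\<Sum>j<m. if i = j then 1 else a) = (\<Sum>j<m. a + (if i = j then 1 - a else 0))"
      by (intro sum.cong) auto
    also have "\<dots> = a * m + (1 - a)" using that by (simp add: sum.distrib)
    finally show ?thesis .
  qed
  then have "(\<Sum>i<m. \<Sum>j<m. if i = j then 1 else (a::real)) = (\<Sum>i<m. a * m + (1 - a))"
    by (intro sum.cong) auto
  also have "\<dots> = m + a * (real m ^ 2 - m)" by (simp add: power2_eq_square algebra_simps)
  finally show ?thesis .
qed

lemma walk_pair:
  fixes n :: nat
  assumes "i < n" "j < n" "0 \<le> p" "p \<le> 1"
  shows "measure_pmf.expectation (Pi_pmf {0..<n} False (\<lambda>_. bernoulli_pmf p)) (\<lambda>X. sg (X i) * sg (X j))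
       = (if i = j then 1 else (2*p-1)^2)"
proof (cases "i = j")
  case True
  then have "(\<lambda>X. sg (X i) * sg (X j)) = (\<lambda>X. 1)" by (auto simp: sg_def fun_eq_iff)
  then show ?thesis using True by simp
next
  case False
  let ?P = "Pi_pmf {0..<n} False (\<lambda>_. bernoulli_pmf p)"
  have E: "measure_pmf.expectation ?P (\<lambda>y. \<Prod>x\<in>S. tb (y x)) = p ^ card S" if "S \<subseteq> {0..<n}" for S
  proof -
    have "measure_pmf.expectation ?P (\<lambda>y. \<Prod>x\<in>S. (\<lambda>_. tb) x (y x)) = (\<Prod>x\<in>S. measure_pmf.expectation (bernoulli_pmf p) tb)"
      by (rule exp_prod_subset) (use that in \<open>auto simp: tb_def\<close>)
    then show ?thesis using assms by (simp add: tb_def)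
  qed
  have e2: "measure_pmf.expectation ?P (\<lambda>X. tb (X i) * tb (X j)) = p^2"
    using E[of "{i,j}"] assms False by (simp add: power2_eq_square)
  have ei: "measure_pmf.expectation ?P (\<lambda>X. tb (X i)) = p"
    using E[of "{i}"] assms by simp
  have ej: "measure_pmf.expectation ?P (\<lambda>X. tb (X j)) = p"
    using E[of "{j}"] assms by simp
  have pw: "(\<lambda>X. sg (X i) * sg (X j)) = (\<lambda>X. 4 * (tb (X i) * tb (X j)) - 2 * tb (X i) - 2 * tb (X j) + 1)"
    by (auto simp: sg_def tb_def fun_eq_iff)
  have i1: "integrable (measure_pmf ?P) (\<lambda>X. tb (X k))" for k
    by (rule int_bdd[where B=1]) (auto simp: tb_def)
  have i2: "integrable (measure_pmf ?P) (\<lambda>X. tb (X i) * tb (X j))"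
    by (rule int_bdd[where B=1]) (auto simp: tb_def)
  have "measure_pmf.expectation ?P (\<lambda>X. sg (X i) * sg (X j)) = 4 * p^2 - 2 * p - 2 * p + 1"
    unfolding pw using i1 i2 e2 ei ej by simp
  then show ?thesis using False by (simp add: power2_eq_square algebra_simps)
qed

lemma walk_E:
  assumes "m \<le> n" "0 \<le> p" "p \<le> 1"
  shows "measure_pmf.expectation (Pi_pmf {0..<n} False (\<lambda>_. bernoulli_pmf p)) (\<lambda>X. (real_of_int (walk_pos X m))^2)
       = m + (2*p-1)^2 * (real m ^ 2 - m)"
proof -
  let ?P = "Pi_pmf {0..<n} False (\<lambda>_. bernoulli_pmf p)"
  have sq: "(real_of_int (walk_pos X m))^2 = (\<Sum>i<m. \<Sum>j<m. sg (X i) * sg (X j))" for X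
    by (simp add: walk_pos_real power2_eq_square sum_product)
  have iI: "integrable (measure_pmf ?P) (\<lambda>X. sg (X i) * sg (X j))" for i j
    by (rule int_bdd[where B=1]) (auto simp: sg_def)
  have "measure_pmf.expectation ?P (\<lambda>X. (real_of_int (walk_pos X m))^2)
     = (\<Sum>i<m. \<Sum>j<m. measure_pmf.expectation ?P (\<lambda>X. sg (X i) * sg (X j)))"
    unfolding sq using iI by (simp add: Bochner_Integration.integral_sum integrable_sum)
  also have "\<dots> = (\<Sum>i<m. \<Sum>j<m. if i = j then 1 else (2*p-1)^2)"
    using assms by (intro sum.cong refl walk_pair) auto
  finally show ?thesis by (simp add: sum_if_diag)
qed

definition ind :: "nat \<Rightarrow> nat \<Rightarrow> (nat \<Rightarrow> nat) \<Rightarrow> real" where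
  "ind k j u = (if u j = k then 1 else 0)"

lemma deg_real: "real (rrt_deg n u k) = (\<Sum>j\<in>{k..<n}. ind k j u)"
proof -
  have "(\<Sum>j\<in>{k..<n}. ind k j u) = (\<Sum>j\<in>{j \<in> {k..<n}. u j = k}. 1)"
    unfolding ind_def by (subst sum.inter_filter[symmetric]) auto
  then show ?thesis by (simp add: rrt_deg_def)
qed

lemma deg_le: "rrt_deg n u k \<le> n"
proof -
  have "rrt_deg n u k \<le> card {k..<n}" unfolding rrt_deg_def by (intro card_mono) auto
  then show ?thesis by simp
qed

lemma tree_prod:
  assumes "1 \<le> k" "S \<subseteq> {k..<n}"
  shows "measure_pmf.expectation (rrt_pmf n) (\<lambda>u. \<Prod>j\<in>S. ind k j u) = (\<Prod>j\<in>S. 1 / real j)"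
proof -
  have "measure_pmf.expectation (rrt_pmf n) (\<lambda>u. \<Prod>j\<in>S. (\<lambda>j v. if v = k then 1 else 0) j (u j))
      = (\<Prod>j\<in>S. measure_pmf.expectation (pmf_of_set {1..j}) (\<lambda>v. if v = k then 1 else (0::real)))"
    unfolding rrt_pmf_def by (rule exp_prod_subset) (use assms in auto)
  also have "\<dots> = (\<Prod>j\<in>S. 1 / real j)"
  proof (rule prod.cong[OF refl])
    fix j assume "j \<in> S"
    then have kj: "k \<le> j" "1 \<le> j" using assms by auto
    have "measure_pmf.expectation (pmf_of_set {1..j}) (\<lambda>v. if v = k then 1 else (0::real))
        = (\<Sum>v\<in>{1..j}. if v = k then 1 else (0::real)) / card {1..j}"
      using kj by (intro integral_pmf_of_set) auto
    also have "\<dots> = 1 / real j" using kj assms by (simp add: sum.delta')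
    finally show "measure_pmf.expectation (pmf_of_set {1..j}) (\<lambda>v. if v = k then 1 else (0::real)) = 1 / real j" .
  qed
  finally show ?thesis by (simp add: ind_def)
qed

lemma tree_pair:
  assumes "1 \<le> k" "i \<in> {k..<n}" "j \<in> {k..<n}"
  shows "measure_pmf.expectation (rrt_pmf n) (\<lambda>u. ind k i u * ind k j u)
       = (if i = j then 1 / real i else 1 / (real i * real j))"
proof (cases "i = j")
  case True
  have "(\<lambda>u. ind k i u * ind k j u) = (\<lambda>u. \<Prod>j\<in>{i}. ind k j u)" using True by (auto simp: ind_def fun_eq_iff)
  then show ?thesis using tree_prod[of k "{i}" n] assms True by simp
next
  case False
  have "(\<lambda>u. ind k i u * ind k j u) = (\<lambda>u. \<Prod>j\<in>{i,j}. ind k j u)" using False by (auto simp: fun_eq_iff)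
  then show ?thesis using tree_prod[of k "{i,j}" n] assms False by simp
qed

definition aa :: "nat \<Rightarrow> nat \<Rightarrow> real" where "aa n k = (\<Sum>j\<in>{k..<n}. 1 / real j)"
definition bb :: "nat \<Rightarrow> nat \<Rightarrow> real" where "bb n k = (\<Sum>j\<in>{k..<n}. 1 / (real j)^2)"

lemma ind_int: "integrable (measure_pmf M) (\<lambda>u. ind k i u * ind k j u)" "integrable (measure_pmf M) (ind k i)"
  by (rule int_bdd[where B=1], simp add: ind_def)+

lemma tree_E1:
  assumes "1 \<le> k"
  shows "measure_pmf.expectation (rrt_pmf n) (\<lambda>u. real (rrt_deg n u k)) = aa n k"
proof -
  have "measure_pmf.expectation (rrt_pmf n) (\<lambda>u. real (rrt_deg n u k))
      = (\<Sum>j\<in>{k..<n}. measure_pmf.expectation (rrt_pmf n) (\<lambda>u. \<Prod>j\<in>{j}. ind k j u))"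
    unfolding deg_real using ind_int by (simp add: Bochner_Integration.integral_sum)
  also have "\<dots> = aa n k" unfolding aa_def using assms
    by (intro sum.cong refl) (subst tree_prod, auto)
  finally show ?thesis .
qed

lemma tree_E2:
  assumes "1 \<le> k"
  shows "measure_pmf.expectation (rrt_pmf n) (\<lambda>u. (real (rrt_deg n u k))^2) = (aa n k)^2 + aa n k - bb n k"
proof -
  let ?J = "{k..<n}"
  have "measure_pmf.expectation (rrt_pmf n) (\<lambda>u. (real (rrt_deg n u k))^2)
      = (\<Sum>i\<in>?J. \<Sum>j\<in>?J. measure_pmf.expectation (rrt_pmf n) (\<lambda>u. ind k i u * ind k j u))"
    unfolding deg_real power2_eq_square sum_product using ind_int by (simp add: Bochner_Integration.integral_sum integrable_sum)
  also have "\<dots> = (\<Sum>i\<in>?J. \<Sum>j\<in>?J. if i = j then 1 / real i else 1 / (real i * real j))"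
    using assms by (intro sum.cong refl tree_pair) auto
  also have "\<dots> = (\<Sum>i\<in>?J. \<Sum>j\<in>?J. 1 / real i * (1 / real j) + (if i = j then 1 / real i - 1 / (real i)^2 else 0))"
    by (intro sum.cong refl) (auto simp: power2_eq_square)
  also have "\<dots> = (aa n k)^2 + (\<Sum>i\<in>?J. 1 / real i - 1 / (real i)^2)"
    by (simp add: sum.distrib aa_def power2_eq_square sum_product)
  also have "\<dots> = (aa n k)^2 + aa n k - bb n k"
    by (simp add: aa_def bb_def sum_subtractf)
  finally show ?thesis .
qed

lemma walk_bound: "\<bar>real_of_int (walk_pos Y m)\<bar> \<le> real m"
proof -
  have "\<bar>\<Sum>i<m. sg (Y i)\<bar> \<le> (\<Sum>i<m. \<bar>sg (Y i)\<bar>)" by (rule sum_abs)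
  also have "\<dots> = (\<Sum>i<m. 1)" by (intro sum.cong) (auto simp: sg_def)
  also have "\<dots> = real m" by simp
  finally show ?thesis by (simp add: walk_pos_real)
qed

lemma walks_comp:
  fixes g :: "(nat \<Rightarrow> bool) \<Rightarrow> real"
  assumes "k \<in> {1..n}"
  shows "measure_pmf.expectation (walks_pmf p n) (\<lambda>X. g (X k))
       = measure_pmf.expectation (Pi_pmf {0..<n} False (\<lambda>_. bernoulli_pmf p)) g"
proof -
  have "map_pmf (\<lambda>X. X k) (walks_pmf p n) = Pi_pmf {0..<n} False (\<lambda>_. bernoulli_pmf p)"
    unfolding walks_pmf_def using assms by (subst Pi_pmf_component) auto
  then have "measure_pmf.expectation (map_pmf (\<lambda>X. X k) (walks_pmf p n)) g
       = measure_pmf.expectation (Pi_pmf {0..<n} False (\<lambda>_. bernoulli_pmf p)) g" by simp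
  then show ?thesis by (simp only: integral_map_pmf)
qed

lemma joint_k:
  assumes p: "0 \<le> p" "p \<le> 1" and k: "1 \<le> k" "k \<le> n"
  shows "measure_pmf.expectation (joint_pmf p n) (\<lambda>(u, X). (real_of_int (walk_pos (X k) (rrt_deg n u k)))^2)
       = (1 - (2*p-1)^2) * aa n k + (2*p-1)^2 * ((aa n k)^2 + aa n k - bb n k)"
proof -
  let ?a = "(2*p-1)^2"
  have fB: "(case x of (u, X) \<Rightarrow> (real_of_int (walk_pos (X k) (rrt_deg n u k)))^2) \<le> (real n)^2" for x
  proof (cases x)
    case (Pair u X)
    have "\<bar>real_of_int (walk_pos (X k) (rrt_deg n u k))\<bar> \<le> real n"
      using walk_bound[of "X k" "rrt_deg n u k"] deg_le[of n u k] by linarith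
    then show ?thesis using Pair by (simp add: abs_le_square_iff[symmetric])
  qed
  have "measure_pmf.expectation (joint_pmf p n) (\<lambda>(u, X). (real_of_int (walk_pos (X k) (rrt_deg n u k)))^2)
     = measure_pmf.expectation (rrt_pmf n) (\<lambda>u. measure_pmf.expectation (walks_pmf p n)
          (\<lambda>X. (real_of_int (walk_pos (X k) (rrt_deg n u k)))^2))"
    unfolding joint_pmf_def by (subst exp_pair[OF _ fB]) auto
  also have "\<dots> = measure_pmf.expectation (rrt_pmf n) (\<lambda>u. (1 - ?a) * real (rrt_deg n u k) + ?a * (real (rrt_deg n u k))^2)"
  proof (intro Bochner_Integration.integral_cong refl)
    fix u
    have "measure_pmf.expectation (walks_pmf p n) (\<lambda>X. (real_of_int (walk_pos (X k) (rrt_deg n u k)))^2)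
        = measure_pmf.expectation (Pi_pmf {0..<n} False (\<lambda>_. bernoulli_pmf p)) (\<lambda>Y. (real_of_int (walk_pos Y (rrt_deg n u k)))^2)"
      using k by (intro walks_comp) auto
    also have "\<dots> = real (rrt_deg n u k) + ?a * ((real (rrt_deg n u k))^2 - real (rrt_deg n u k))"
      using p deg_le by (intro walk_E) auto
    finally show "measure_pmf.expectation (walks_pmf p n) (\<lambda>X. (real_of_int (walk_pos (X k) (rrt_deg n u k)))^2)
       = (1 - ?a) * real (rrt_deg n u k) + ?a * (real (rrt_deg n u k))^2" by (simp add: algebra_simps)
  qed
  also have "\<dots> = (1 - ?a) * measure_pmf.expectation (rrt_pmf n) (\<lambda>u. real (rrt_deg n u k))
       + ?a * measure_pmf.expectation (rrt_pmf n) (\<lambda>u. (real (rrt_deg n u k))^2)"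
  proof -
    have i1: "integrable (measure_pmf (rrt_pmf n)) (\<lambda>u. real (rrt_deg n u k))"
      by (rule int_bdd[where B="real n"]) (simp add: deg_le)
    have i2: "integrable (measure_pmf (rrt_pmf n)) (\<lambda>u. (real (rrt_deg n u k))^2)"
      by (rule int_bdd[where B="(real n)^2"]) (simp add: deg_le power_mono)
    show ?thesis using i1 i2 by simp
  qed
  also have "\<dots> = (1 - ?a) * aa n k + ?a * ((aa n k)^2 + aa n k - bb n k)"
    using k by (simp add: tree_E1 tree_E2)
  finally show ?thesis .
qed

lemma aa_step: "k \<le> Suc m \<Longrightarrow> aa (Suc (Suc m)) k = aa (Suc m) k + 1 / real (Suc m)"
  unfolding aa_def by (subst sum.atLeastLessThan_Suc) auto

lemma bb_step: "k \<le> Suc m \<Longrightarrow> bb (Suc (Suc m)) k = bb (Suc m) k + 1 / (real (Suc m))^2"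
  unfolding bb_def by (subst sum.atLeastLessThan_Suc) auto

lemma aa_last: "aa n n = 0" and bb_last: "bb n n = 0"
  by (simp_all add: aa_def bb_def)

lemma sumA: "(\<Sum>k=1..Suc m. aa (Suc m) k) = real m"
proof (induction m)
  case 0 then show ?case by (simp add: aa_def)
next
  case (Suc m)
  have "(\<Sum>k=1..Suc (Suc m). aa (Suc (Suc m)) k) = (\<Sum>k=1..Suc m. aa (Suc (Suc m)) k)"
    by (simp add: sum.cl_ivl_Suc aa_last)
  also have "\<dots> = (\<Sum>k=1..Suc m. aa (Suc m) k + 1 / real (Suc m))"
    by (intro sum.cong refl aa_step) auto
  also have "\<dots> = real (Suc m)" using Suc by (simp add: sum.distrib)
  finally show ?case .
qed

lemma sumB: "(\<Sum>k=1..Suc m. bb (Suc m) k) = harm m"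
proof (induction m)
  case 0 then show ?case by (simp add: bb_def harm_def)
next
  case (Suc m)
  have "(\<Sum>k=1..Suc (Suc m). bb (Suc (Suc m)) k) = (\<Sum>k=1..Suc m. bb (Suc (Suc m)) k)"
    by (simp add: sum.cl_ivl_Suc bb_last)
  also have "\<dots> = (\<Sum>k=1..Suc m. bb (Suc m) k + 1 / (real (Suc m))^2)"
    by (intro sum.cong refl bb_step) auto
  also have "\<dots> = harm m + real (Suc m) / (real (Suc m))^2" using Suc by (simp add: sum.distrib)
  also have "\<dots> = harm (Suc m)" by (simp add: harm_Suc power2_eq_square divide_simps del: of_nat_Suc)
  finally show ?case .
qed

lemma sum3: "(\<Sum>k\<in>K. (x k)^2 + c * x k + (d::real)) = (\<Sum>k\<in>K. (x k)^2) + c * (\<Sum>k\<in>K. x k) + real (card K) * d"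
  by (simp add: sum.distrib sum_distrib_left)

lemma sum4: "(\<Sum>k\<in>K. (1 - a) * x k + a * ((x k)^2 + x k - y k)) = (1 - a) * (\<Sum>k\<in>K. x k) + a * ((\<Sum>k\<in>K. (x k)^2) + (\<Sum>k\<in>K. x k) - (\<Sum>k\<in>K. (y k::real)))"
  by (simp add: sum.distrib sum_distrib_left sum_subtractf algebra_simps)

lemma sumT: "(\<Sum>k=1..Suc m. (aa (Suc m) k)^2) = 2 * real m - harm m"
proof (induction m)
  case 0 then show ?case by (simp add: aa_def harm_def)
next
  case (Suc m)
  have "(\<Sum>k=1..Suc (Suc m). (aa (Suc (Suc m)) k)^2) = (\<Sum>k=1..Suc m. (aa (Suc (Suc m)) k)^2)"
    by (simp add: sum.cl_ivl_Suc aa_last)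
  also have "\<dots> = (\<Sum>k=1..Suc m. (aa (Suc m) k)^2 + 2 / real (Suc m) * aa (Suc m) k + 1 / (real (Suc m))^2)"
    by (intro sum.cong refl) (simp add: aa_step power2_eq_square algebra_simps)
  also have "\<dots> = 2 * real m - harm m + 2 / real (Suc m) * real m + real (Suc m) / (real (Suc m))^2"
    by (simp only: sum3 Suc sumA) simp
  also have "\<dots> = 2 * real (Suc m) - harm (Suc m)"
    by (simp add: harm_Suc power2_eq_square field_simps del: of_nat_Suc) (simp add: algebra_simps)
  finally show ?case .
qed

lemma ssm_formula:
  assumes "0 \<le> p" "p \<le> 1"
  shows "sum_second_moments p (Suc m) = real m * (1 + 2 * (2*p-1)^2) - 2 * (2*p-1)^2 * harm m"
proof -
  let ?a = "(2*p-1)^2"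
  have "sum_second_moments p (Suc m) = (\<Sum>k=1..Suc m. (1 - ?a) * aa (Suc m) k + ?a * ((aa (Suc m) k)^2 + aa (Suc m) k - bb (Suc m) k))"
    unfolding sum_second_moments_def using assms by (intro sum.cong refl joint_k) auto
  also have "\<dots> = (1 - ?a) * (\<Sum>k=1..Suc m. aa (Suc m) k) + ?a * ((\<Sum>k=1..Suc m. (aa (Suc m) k)^2) + (\<Sum>k=1..Suc m. aa (Suc m) k) - (\<Sum>k=1..Suc m. bb (Suc m) k))"
    by (rule sum4)
  also have "\<dots> = real m * (1 + 2 * ?a) - 2 * ?a * harm m"
    by (simp only: sumA sumB sumT) (simp add: algebra_simps)
  finally show ?thesis .
qed

lemma harm_le_ln: "m > 0 \<Longrightarrow> harm m \<le> 1 + ln (real m)"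
  using euler_mascheroni_sequence_decreasing[of 1 m] by (simp add: harm_def)

theorem lemma2p3:
  fixes p1 :: real
  assumes "0 \<le> p1" "p1 \<le> 1"
  defines "\<alpha>1 \<equiv> 2 * p1 - 1"
  shows "(\<lambda>n. sum_second_moments p1 n - real n * (1 + 2 * \<alpha>1^2))
           \<in> O(\<lambda>n. (ln (real n))^2)"
proof (rule bigoI[where c=7])
  have a1: "\<alpha>1^2 \<le> 1" using assms unfolding \<alpha>1_def by (simp add: abs_le_square_iff[symmetric, of _ 1, simplified])
  have a0: "0 \<le> \<alpha>1^2" by simp
  show "eventually (\<lambda>n. norm (sum_second_moments p1 n - real n * (1 + 2 * \<alpha>1^2)) \<le> 7 * norm ((ln (real n))^2)) at_top"
    unfolding eventually_at_top_linorder
  proof (intro exI[of _ 3] allI impI)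
    fix n :: nat assume n3: "3 \<le> n"
    then obtain m where nm: "n = Suc m" and m0: "m > 0" by (cases n) auto
    have L1: "1 \<le> ln (real n)"
    proof -
      have "exp 1 \<le> real n" using exp_le n3 by linarith
      then have "ln (exp 1) \<le> ln (real n)" using n3 by (subst ln_le_cancel_iff) auto
      then show ?thesis by simp
    qed
    have Hm: "harm m \<le> 1 + ln (real n)"
    proof -
      have "ln (real m) \<le> ln (real n)" using m0 nm by (subst ln_le_cancel_iff) auto
      then show ?thesis using harm_le_ln[OF m0] by linarith
    qed
    have H0: "0 \<le> (harm m :: real)" by (rule harm_nonneg)
    have eq: "sum_second_moments p1 n - real n * (1 + 2 * \<alpha>1^2) = - (1 + 2 * \<alpha>1^2) - 2 * \<alpha>1^2 * harm m"
      unfolding nm ssm_formula[OF assms(1,2)] \<alpha>1_def by (simp add: algebra_simps)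
    have "\<bar>- (1 + 2 * \<alpha>1^2) - 2 * \<alpha>1^2 * harm m\<bar> = (1 + 2 * \<alpha>1^2) + 2 * \<alpha>1^2 * harm m"
    proof -
      have "0 \<le> \<alpha>1^2 * harm m" using a0 H0 by simp
      then have "- (1 + 2 * \<alpha>1^2) - 2 * \<alpha>1^2 * harm m \<le> 0" using a0 by linarith
      then show ?thesis by (subst abs_of_nonpos) auto
    qed
    also have "\<dots> \<le> 3 + 2 * harm m"
      using a1 a0 H0 mult_right_mono[OF a1 H0] by linarith
    also have "\<dots> \<le> 5 + 2 * ln (real n)" using Hm by linarith
    also have "\<dots> \<le> 7 * (ln (real n))^2"
    proof -
      have "ln (real n) * 1 \<le> ln (real n) * ln (real n)" using L1 by (intro mult_left_mono) auto
      then show ?thesis using L1 unfolding power2_eq_square by linarith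
    qed
    finally show "norm (sum_second_moments p1 n - real n * (1 + 2 * \<alpha>1^2)) \<le> 7 * norm ((ln (real n))^2)"
      unfolding eq by simp
  qed
qed

end
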